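(* Let $L$ be an LP in standard form: minimize $c^{\top}x$ subject to $Ax=b$, $Bx\le d$, $x\in\mathbb{R}^n$, with feasible set $\mathcal{F}$, and let $H$ be a subgroup of $G^{\rm Null}_{(A,B,d,c)}$. Let $\mathrm{Fix}_H(\mathbb{R}^n)=\{x\in\mathbb{R}^n: h(x)=x \text{ for all } h\in H\}$ and $\mathcal{T}=\mathcal{F}\cap \mathrm{Fix}_H(\mathbb{R}^n)$. Then $\mathcal{T}$ is non-empty if and only if $H$ is a subgroup of $G(A,b,B,d,c)^{\rm LP}$.
   Context: Here $A\in\mathbb{R}^{m\times n}$, $b\in\mathbb{R}^m$, $B\in\mathbb{R}^{m'\times n}$, $d\in\mathbb{R}^{m'}$, $c\in\mathbb{R}^n$. A constraint is redundant if deleting it does not change the feasible set. $L$ is in standard form if $\mathcal{F}\neq\emptyset$, $L$ has no redundant (equality or inequality) constraints, and none of the inequalities in $Bx\le d$ is satisfied with equality by every point of $\mathcal{F}$. $S_n$ acts on $\mathbb{R}^n$ by $\pi(x)=(x_{\pi^{-1}(1)},\dots,x_{\pi^{-1}(n)})^{\top}$, and $\Pi$ is the permutation matrix with $\Pi x=\pi(x)$. Define $G^{\rm LP}=\{\pi\in S_n: \pi(x)\in\mathcal{F}\text{ and } c^{\top}\pi(x)=c^{\top}x \text{ for all } x\in\mathcal{F}\}$ and $G(A,b,B,d,c)^{\rm LP}=\{\pi\in G^{\rm LP}:\pi(c)=c\}$. Let $G(B,d,c)$ be the set of $\pi\in S_n$ with $\pi(c)=c$ for which there exists a permutation $\sigma$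 of $\{1,\dots,m'\}$ with $B_{\sigma(i),\pi(j)}=B_{ij}$ and $d_{\sigma(i)}=d_i$ for all $i,j$ (if $B$ is empty, $G(B,d,c)=\{\pi:\pi(c)=c\}$). Let $\mathrm{Stab}(\mathrm{Row}(A))=\{\pi\in S_n:\Pi v\in\mathrm{Row}(A)\ \forall v\in\mathrm{Row}(A)\}$, where $\mathrm{Row}(A)\subseteq\mathbb{R}^n$ is the row space of $A$, and $G^{\rm Null}_{(A,B,d,c)}=\mathrm{Stab}(\mathrm{Row}(A))\cap G(B,d,c)$. *)

theory Defs
  imports "HOL-Analysis.Analysis" "HOL-Algebra.Bij"
begin

text \<open>Columns (variables) are indexed by a finite type 'n, so R^n is real^'n.
Rows of A (resp. B) are given as functions nat => real^'n, of which the
first m (resp. m') are the constraints; this allows empty A or B.\<close>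

definition perm_act :: "('n::finite \<Rightarrow> 'n) \<Rightarrow> real^'n \<Rightarrow> real^'n" where
  "perm_act p x = (\<chi> i. x $ (inv_into UNIV p i))"

definition feasible ::
  "nat \<Rightarrow> (nat \<Rightarrow> real^'n::finite) \<Rightarrow> (nat \<Rightarrow> real) \<Rightarrow>
   nat \<Rightarrow> (nat \<Rightarrow> real^'n) \<Rightarrow> (nat \<Rightarrow> real) \<Rightarrow> (real^'n) set" where
  "feasible m A b m' B d =
     {x. (\<forall>i<m. A i \<bullet> x = b i) \<and> (\<forall>i<m'. B i \<bullet> x \<le> d i)}"

definition feasible_del_eq ::
  "nat \<Rightarrow> nat \<Rightarrow> (nat \<Rightarrow> real^'n::finite) \<Rightarrow> (nat \<Rightarrow> real) \<Rightarrow>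
   nat \<Rightarrow> (nat \<Rightarrow> real^'n) \<Rightarrow> (nat \<Rightarrow> real) \<Rightarrow> (real^'n) set" where
  "feasible_del_eq k m A b m' B d =
     {x. (\<forall>i<m. i \<noteq> k \<longrightarrow> A i \<bullet> x = b i) \<and> (\<forall>i<m'. B i \<bullet> x \<le> d i)}"

definition feasible_del_ineq ::
  "nat \<Rightarrow> nat \<Rightarrow> (nat \<Rightarrow> real^'n::finite) \<Rightarrow> (nat \<Rightarrow> real) \<Rightarrow>
   nat \<Rightarrow> (nat \<Rightarrow> real^'n) \<Rightarrow> (nat \<Rightarrow> real) \<Rightarrow> (real^'n) set" where
  "feasible_del_ineq k m A b m' B d =
     {x. (\<forall>i<m. A i \<bullet> x = b i) \<and> (\<forall>i<m'. i \<noteq> k \<longrightarrow> B i \<bullet> x \<le> d i)}"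

definition standard_form ::
  "nat \<Rightarrow> (nat \<Rightarrow> real^'n::finite) \<Rightarrow> (nat \<Rightarrow> real) \<Rightarrow>
   nat \<Rightarrow> (nat \<Rightarrow> real^'n) \<Rightarrow> (nat \<Rightarrow> real) \<Rightarrow> bool" where
  "standard_form m A b m' B d \<longleftrightarrow>
     feasible m A b m' B d \<noteq> {} \<and>
     (\<forall>k<m. feasible_del_eq k m A b m' B d \<noteq> feasible m A b m' B d) \<and>
     (\<forall>k<m'. feasible_del_ineq k m A b m' B d \<noteq> feasible m A b m' B d) \<and>
     (\<forall>k<m'. \<exists>x\<in>feasible m A b m' B d. B k \<bullet> x < d k)"

definition G_LP ::
  "nat \<Rightarrow> (nat \<Rightarrow> real^'n::finite) \<Rightarrow> (nat \<Rightarrow> real) \<Rightarrow>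
   nat \<Rightarrow> (nat \<Rightarrow> real^'n) \<Rightarrow> (nat \<Rightarrow> real) \<Rightarrow> real^'n \<Rightarrow> ('n \<Rightarrow> 'n) set" where
  "G_LP m A b m' B d c =
     {p. p permutes UNIV \<and>
         (\<forall>x\<in>feasible m A b m' B d. perm_act p x \<in> feasible m A b m' B d \<and>
                                     c \<bullet> perm_act p x = c \<bullet> x)}"

definition G_LP_c ::
  "nat \<Rightarrow> (nat \<Rightarrow> real^'n::finite) \<Rightarrow> (nat \<Rightarrow> real) \<Rightarrow>
   nat \<Rightarrow> (nat \<Rightarrow> real^'n) \<Rightarrow> (nat \<Rightarrow> real) \<Rightarrow> real^'n \<Rightarrow> ('n \<Rightarrow> 'n) set" where
  "G_LP_c m A b m' B d c = {p \<in> G_LP m A b m' B d c. perm_act p c = c}"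

definition G_Bdc ::
  "nat \<Rightarrow> (nat \<Rightarrow> real^'n::finite) \<Rightarrow> (nat \<Rightarrow> real) \<Rightarrow> real^'n \<Rightarrow> ('n \<Rightarrow> 'n) set" where
  "G_Bdc m' B d c =
     {p. p permutes UNIV \<and> perm_act p c = c \<and>
         (\<exists>\<sigma>. \<sigma> permutes {..<m'} \<and>
              (\<forall>i<m'. d (\<sigma> i) = d i \<and> (\<forall>j. B (\<sigma> i) $ (p j) = B i $ j)))}"

definition row_space :: "nat \<Rightarrow> (nat \<Rightarrow> real^'n::finite) \<Rightarrow> (real^'n) set" where
  "row_space m A = span (A ` {..<m})"

definition Stab_Row :: "nat \<Rightarrow> (nat \<Rightarrow> real^'n::finite) \<Rightarrow> ('n \<Rightarrow> 'n) set" where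
  "Stab_Row m A = {p. p permutes UNIV \<and> (\<forall>v\<in>row_space m A. perm_act p v \<in> row_space m A)}"

definition G_Null ::
  "nat \<Rightarrow> (nat \<Rightarrow> real^'n::finite) \<Rightarrow> nat \<Rightarrow> (nat \<Rightarrow> real^'n) \<Rightarrow> (nat \<Rightarrow> real) \<Rightarrow>
   real^'n \<Rightarrow> ('n \<Rightarrow> 'n) set" where
  "G_Null m A m' B d c = Stab_Row m A \<inter> G_Bdc m' B d c"

definition Fix_set :: "('n::finite \<Rightarrow> 'n) set \<Rightarrow> (real^'n) set" where
  "Fix_set H = {x. \<forall>h\<in>H. perm_act h x = x}"

abbreviation Sym :: "('n::finite \<Rightarrow> 'n) monoid" where
  "Sym \<equiv> BijGroup (UNIV :: 'n set)"

end

theory Submission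
  imports Defs
begin

lemma sym_mult: "bij f \<Longrightarrow> bij g \<Longrightarrow> f \<otimes>\<^bsub>Sym\<lparr>carrier:=G\<rparr>\<^esub> g = f \<circ> g"
  by (auto simp: BijGroup_def Bij_def compose_def)

lemma sym_mult0: "bij f \<Longrightarrow> bij g \<Longrightarrow> f \<otimes>\<^bsub>Sym\<^esub> g = f \<circ> g"
  by (auto simp: BijGroup_def Bij_def compose_def)

lemma sym_one0: "\<one>\<^bsub>(Sym :: ('n::finite \<Rightarrow> 'n) monoid)\<^esub> = id"
  by (auto simp: BijGroup_def)

lemma sym_carrier: "carrier (Sym\<lparr>carrier:=G\<rparr>) = G"
  by simp

lemma sym_one: "\<one>\<^bsub>(Sym :: ('n::finite \<Rightarrow> 'n) monoid)\<lparr>carrier:=G\<rparr>\<^esub> = id"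
  by (auto simp: BijGroup_def)

lemma right_inv_unique:
  assumes "bij h" "h \<circ> k = id"
  shows "k = inv_into UNIV h"
proof -
  have e: "inv_into UNIV h \<circ> h = id" using assms(1) bij_is_inj inj_iff by blast
  have "k = (inv_into UNIV h \<circ> h) \<circ> k" by (simp only: e id_comp)
  also have "\<dots> = inv_into UNIV h \<circ> (h \<circ> k)" by (simp only: comp_assoc)
  also have "\<dots> = inv_into UNIV h" by (simp only: assms(2) comp_id)
  finally show ?thesis .
qed

lemma inv_in:
  fixes H :: "('n::finite \<Rightarrow> 'n) set"
  assumes "\<forall>p\<in>H. p permutes UNIV" "\<And>x y. x\<in>H \<Longrightarrow> y\<in>H \<Longrightarrow> x\<circ>y\<in>H" "id\<in>H" "h\<in>H"
  shows "inv_into UNIV h \<in> H"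
proof -
  have bh: "bij h" using assms permutes_bij by blast
  have img: "(\<lambda>k. h \<circ> k) ` H = H"
  proof (rule endo_inj_surj)
    show "finite H" by (rule finite)
    show "(\<lambda>k. h \<circ> k) ` H \<subseteq> H" using assms(2,4) by blast
    show "inj_on (\<lambda>k. h \<circ> k) H"
    proof (rule inj_onI)
      fix k1 k2 assume "h \<circ> k1 = h \<circ> k2"
      then show "k1 = k2" using bij_is_inj[OF bh] by (simp add: fun_eq_iff inj_eq)
    qed
  qed
  have "id \<in> (\<lambda>k. h \<circ> k) ` H" using img assms(3) by simp
  then obtain k where k: "k \<in> H" "id = h \<circ> k" by blast
  have "k = inv_into UNIV h" using right_inv_unique[OF bh k(2)[symmetric]] .
  then show ?thesis using k(1) by simp
qed

lemma subgroup_SymI: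
  fixes H :: "('n::finite \<Rightarrow> 'n) set"
  assumes "G \<subseteq> {p. p permutes UNIV}" "H \<subseteq> G" "\<And>x y. x\<in>H \<Longrightarrow> y\<in>H \<Longrightarrow> x\<circ>y\<in>H" "id\<in>H"
  shows "subgroup H (Sym\<lparr>carrier:=G\<rparr>)"
proof
  have P: "\<forall>p\<in>H. p permutes UNIV" using assms by auto
  show "H \<subseteq> carrier (Sym\<lparr>carrier:=G\<rparr>)" using assms by simp
  fix x y assume "x \<in> H" "y \<in> H"
  then show "x \<otimes>\<^bsub>Sym\<lparr>carrier:=G\<rparr>\<^esub> y \<in> H"
    using P assms(3) \<open>x\<in>H\<close> \<open>y\<in>H\<close> permutes_bij[of x UNIV] permutes_bij[of y UNIV]
    by (simp add: sym_mult sym_mult0)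
next
  show "one (Sym\<lparr>carrier:=G\<rparr>) \<in> H" using assms(4) by (simp add: sym_one sym_one0)
next
  fix x assume x: "x \<in> H"
  have P: "\<forall>p\<in>H. p permutes UNIV" using assms by auto
  have ix: "inv_into UNIV x \<in> H" using inv_in[OF P assms(3,4) x] .
  have bx: "bij x" "bij (inv_into UNIV x)" using P x ix permutes_bij by blast+
  have e1: "x \<circ> inv_into UNIV x = id" using bx(1) by (meson bij_is_surj surj_iff)
  have e2: "inv_into UNIV x \<circ> x = id" using bx(1) by (meson bij_is_inj inj_iff)
  have ixG: "inv_into UNIV x \<in> G" using ix assms(2) by blast
  have "m_inv (Sym\<lparr>carrier:=G\<rparr>) x = inv_into UNIV x"
    unfolding m_inv_def
  proof (rule the_equality)
    show "inv_into UNIV x \<in> carrier (Sym\<lparr>carrier:=G\<rparr>) \<and> x \<otimes>\<^bsub>Sym\<lparr>carrier:=G\<rparr>\<^esub> inv_into UNIV x = one (Sym\<lparr>carrier:=G\<rparr>)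
      \<and> inv_into UNIV x \<otimes>\<^bsub>Sym\<lparr>carrier:=G\<rparr>\<^esub> x = one (Sym\<lparr>carrier:=G\<rparr>)"
      unfolding sym_carrier sym_mult[OF bx(1) bx(2)] sym_mult[OF bx(2) bx(1)] sym_one
      using ixG e1 e2 by blast
  next
    fix y assume yy: "y \<in> carrier (Sym\<lparr>carrier:=G\<rparr>) \<and> x \<otimes>\<^bsub>Sym\<lparr>carrier:=G\<rparr>\<^esub> y = one (Sym\<lparr>carrier:=G\<rparr>)
      \<and> y \<otimes>\<^bsub>Sym\<lparr>carrier:=G\<rparr>\<^esub> x = one (Sym\<lparr>carrier:=G\<rparr>)"
    then have yG: "y \<in> G" unfolding sym_carrier by blast
    then have yb: "bij y" using assms(1) permutes_bij by blast
    have "x \<circ> y = id" using yy unfolding sym_mult[OF bx(1) yb] sym_one by blast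
    then show "y = inv_into UNIV x" using right_inv_unique bx(1) by blast
  qed
  then show "m_inv (Sym\<lparr>carrier:=G\<rparr>) x \<in> H" using ix by simp
qed

lemma subgroup_SymD:
  fixes H :: "('n::finite \<Rightarrow> 'n) set"
  assumes "subgroup H (Sym\<lparr>carrier:=G\<rparr>)" "G \<subseteq> {p. p permutes UNIV}"
  shows "H \<subseteq> G" "\<And>x y. x\<in>H \<Longrightarrow> y\<in>H \<Longrightarrow> x\<circ>y\<in>H" "id\<in>H"
proof -
  have sub: "H \<subseteq> G" using subgroup.subset[OF assms(1)] unfolding sym_carrier .
  then show "H \<subseteq> G" .
  fix x y assume xy: "x\<in>H" "y\<in>H"
  then have "bij x" "bij y" using sub assms(2) permutes_bij by blast+
  then have "x \<otimes>\<^bsub>Sym\<lparr>carrier:=G\<rparr>\<^esub> y = x \<circ> y" by (rule sym_mult)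
  then show "x\<circ>y\<in>H" using subgroup.m_closed[OF assms(1) xy] by simp
next
  show "id \<in> H" using subgroup.one_closed[OF assms(1)] unfolding sym_one .
qed

lemma perm_act_comp:
  assumes "p permutes UNIV" "q permutes UNIV"
  shows "perm_act (p \<circ> q) x = perm_act p (perm_act q x)"
  using assms by (simp add: perm_act_def vec_eq_iff o_inv_distrib permutes_bij)

lemma perm_act_id: "perm_act id x = x"
  by (simp add: perm_act_def vec_eq_iff inv_id)

lemma perm_act_inner:
  assumes "p permutes UNIV"
  shows "perm_act p a \<bullet> perm_act p x = a \<bullet> x"
proof -
  have ip: "inv_into UNIV p permutes UNIV" using assms permutes_inv by blast
  have "perm_act p a \<bullet> perm_act p x = (\<Sum>i\<in>UNIV. ((\<lambda>j. a $ j * x $ j) \<circ> inv_into UNIV p) i)"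
    by (simp add: inner_vec_def perm_act_def)
  also have "\<dots> = (\<Sum>j\<in>UNIV. a $ j * x $ j)"
    using sum.permute[OF ip, symmetric] by simp
  finally show ?thesis by (simp add: inner_vec_def)
qed

lemma perm_act_linear: "linear (perm_act p)"
  by (rule linearI) (simp_all add: perm_act_def vec_eq_iff)

lemma perm_act_inner_inv:
  assumes "p permutes UNIV"
  shows "a \<bullet> perm_act p x = perm_act (inv_into UNIV p) a \<bullet> x"
proof -
  have ip: "inv_into UNIV p permutes UNIV" using assms permutes_inv by blast
  have "perm_act p (perm_act (inv_into UNIV p) a) = a"
    using perm_act_comp[OF assms ip, symmetric] assms
    by (simp add: permutes_inv_o perm_act_id)
  then show ?thesis using perm_act_inner[OF assms, of "perm_act (inv_into UNIV p) a" x] by simp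
qed

lemma row_const:
  assumes "v \<in> row_space m A" "y \<in> feasible m A b m' B d" "z \<in> feasible m A b m' B d"
  shows "v \<bullet> y = v \<bullet> z"
proof -
  have "orthogonal (y - z) v"
  proof (rule orthogonal_to_span)
    show "v \<in> span (A ` {..<m})" using assms(1) by (simp add: row_space_def)
    fix w assume "w \<in> A ` {..<m}"
    then show "orthogonal (y - z) w" using assms(2,3)
      by (auto simp: orthogonal_def feasible_def inner_diff_left inner_diff_right inner_commute)
  qed
  then show ?thesis by (simp add: orthogonal_def inner_diff_left inner_diff_right inner_commute)
qed

lemma left_image:
  fixes H :: "('n::finite \<Rightarrow> 'n) set"
  assumes "\<forall>p\<in>H. p permutes UNIV" "\<And>x y. x\<in>H \<Longrightarrow> y\<in>H \<Longrightarrow> x\<circ>y\<in>H" "g\<in>H"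
  shows "(\<lambda>k. g \<circ> k) ` H = H" "inj_on (\<lambda>k. g \<circ> k) H"
proof -
  have bh: "bij g" using assms permutes_bij by blast
  show inj: "inj_on (\<lambda>k. g \<circ> k) H"
  proof (rule inj_onI)
    fix k1 k2 assume "g \<circ> k1 = g \<circ> k2"
    then show "k1 = k2" using bij_is_inj[OF bh] by (simp add: fun_eq_iff inj_eq)
  qed
  show "(\<lambda>k. g \<circ> k) ` H = H"
  proof (rule endo_inj_surj)
    show "finite H" by (rule finite)
    show "(\<lambda>k. g \<circ> k) ` H \<subseteq> H" using assms(2,3) by blast
  qed (rule inj)
qed

theorem theorem3:
  fixes m m' :: nat
    and A B :: "nat \<Rightarrow> real^'n::finite"
    and b d :: "nat \<Rightarrow> real"
    and c :: "real^'n"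
    and H :: "('n \<Rightarrow> 'n) set"
  assumes "standard_form m A b m' B d"
    and "subgroup H (Sym\<lparr>carrier := G_Null m A m' B d c\<rparr>)"
  shows "feasible m A b m' B d \<inter> Fix_set H \<noteq> {} \<longleftrightarrow>
         subgroup H (Sym\<lparr>carrier := G_LP_c m A b m' B d c\<rparr>)"
proof -
  let ?F = "feasible m A b m' B d"
  have GN: "G_Null m A m' B d c \<subseteq> {p. p permutes UNIV}"
    by (auto simp: G_Null_def G_Bdc_def)
  have GL: "G_LP_c m A b m' B d c \<subseteq> {p. p permutes UNIV}"
    by (auto simp: G_LP_c_def G_LP_def)
  note HN = subgroup_SymD[OF assms(2) GN]
  have P: "\<forall>p\<in>H. p permutes UNIV" using HN(1) GN by blast
  show ?thesis
  proof
    assume "?F \<inter> Fix_set H \<noteq> {}"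
    then obtain x0 where x0: "x0 \<in> ?F" "x0 \<in> Fix_set H" by blast
    show "subgroup H (Sym\<lparr>carrier := G_LP_c m A b m' B d c\<rparr>)"
    proof (rule subgroup_SymI[OF GL _ HN(2) HN(3)])
      show "H \<subseteq> G_LP_c m A b m' B d c"
      proof
        fix h assume hH: "h \<in> H"
        have hp: "h permutes UNIV" using P hH by blast
        have ihH: "inv_into UNIV h \<in> H" using inv_in[OF P HN(2) HN(3) hH] .
        have hc: "perm_act h c = c" using hH HN(1) by (auto simp: G_Null_def G_Bdc_def)
        obtain \<sigma> where sg: "\<sigma> permutes {..<m'}"
          "\<And>i. i<m' \<Longrightarrow> d (\<sigma> i) = d i \<and> (\<forall>j. B (\<sigma> i) $ (h j) = B i $ j)"
          using hH HN(1) by (auto simp: G_Null_def G_Bdc_def)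
        have istab: "perm_act (inv_into UNIV h) v \<in> row_space m A" if "v \<in> row_space m A" for v
          using ihH HN(1) that by (auto simp: G_Null_def Stab_Row_def)
        have hx0: "perm_act h x0 = x0" using x0(2) hH by (simp add: Fix_set_def)
        have "perm_act h y \<in> ?F \<and> c \<bullet> perm_act h y = c \<bullet> y" if y: "y \<in> ?F" for y
        proof -
          have eq: "A i \<bullet> perm_act h y = b i" if i: "i < m" for i
          proof -
            have rv: "perm_act (inv_into UNIV h) (A i) \<in> row_space m A"
              using istab i by (simp add: row_space_def span_base)
            have "A i \<bullet> perm_act h y = perm_act (inv_into UNIV h) (A i) \<bullet> y"
              by (rule perm_act_inner_inv[OF hp])
            also have "\<dots> = perm_act (inv_into UNIV h) (A i) \<bullet> x0"
              by (rule row_const[OF rv y x0(1)])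
            also have "\<dots> = A i \<bullet> perm_act h x0"
              by (rule perm_act_inner_inv[OF hp, symmetric])
            also have "\<dots> = b i" using hx0 x0(1) i by (simp add: feasible_def)
            finally show ?thesis .
          qed
          have ineq: "B i \<bullet> perm_act h y \<le> d i" if i: "i < m'" for i
          proof -
            define j where "j = inv_into UNIV \<sigma> i"
            have sj: "\<sigma> j = i" using sg(1) by (simp add: j_def permutes_inverses(1))
            have "j < m'" using permutes_in_image[OF sg(1), of j] sj i by simp
            note j = this sj
            have "B i = perm_act h (B j)"
            proof (subst vec_eq_iff, rule allI)
              fix k
              have "B (\<sigma> j) $ (h (inv_into UNIV h k)) = B j $ (inv_into UNIV h k)"
                using sg(2)[OF j(1)] by blast
              then show "B i $ k = perm_act h (B j) $ k"
                using hp j(2) by (simp add: perm_act_def permutes_inverses(1))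
            qed
            then have "B i \<bullet> perm_act h y = B j \<bullet> y" by (simp add: perm_act_inner[OF hp])
            also have "\<dots> \<le> d j" using y j(1) by (simp add: feasible_def)
            also have "\<dots> = d i" using sg(2)[OF j(1)] j(2) by simp
            finally show ?thesis .
          qed
          have "c \<bullet> perm_act h y = c \<bullet> y"
            using perm_act_inner[OF hp, of c y] hc by simp
          then show ?thesis using eq ineq by (simp add: feasible_def)
        qed
        then show "h \<in> G_LP_c m A b m' B d c"
          using hp hc by (simp add: G_LP_c_def G_LP_def)
      qed
    qed
  next
    assume sL: "subgroup H (Sym\<lparr>carrier := G_LP_c m A b m' B d c\<rparr>)"
    note HL = subgroup_SymD[OF sL GL]
    obtain x where x: "x \<in> ?F" using assms(1) by (auto simp: standard_form_def)
    have fin: "finite H" by simp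
    have cpos: "card H > 0" using HN(3) fin card_gt_0_iff by blast
    have hxF: "perm_act h x \<in> ?F" if "h \<in> H" for h
      using HL(1) that x by (auto simp: G_LP_c_def G_LP_def)
    define xb where "xb = (1 / real (card H)) *\<^sub>R (\<Sum>h\<in>H. perm_act h x)"
    have "xb \<in> ?F"
    proof -
      have "A i \<bullet> xb = b i" if i: "i < m" for i
      proof -
        have "A i \<bullet> xb = (1 / real (card H)) * (\<Sum>h\<in>H. A i \<bullet> perm_act h x)"
          by (simp add: xb_def inner_sum_right)
        also have "(\<Sum>h\<in>H. A i \<bullet> perm_act h x) = (\<Sum>h\<in>H. b i)"
          using hxF i by (intro sum.cong) (auto simp: feasible_def)
        finally show ?thesis using cpos HN(3) by auto
      qed
      moreover have "B i \<bullet> xb \<le> d i" if i: "i < m'" for i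
      proof -
        have "B i \<bullet> xb = (1 / real (card H)) * (\<Sum>h\<in>H. B i \<bullet> perm_act h x)"
          by (simp add: xb_def inner_sum_right)
        moreover have "(\<Sum>h\<in>H. B i \<bullet> perm_act h x) \<le> (\<Sum>h\<in>H. d i)"
          using hxF i by (intro sum_mono) (auto simp: feasible_def)
        ultimately show ?thesis using cpos by (simp add: pos_divide_le_eq mult.commute)
      qed
      ultimately show ?thesis by (simp add: feasible_def)
    qed
    moreover have "xb \<in> Fix_set H"
      unfolding Fix_set_def
    proof (intro CollectI ballI)
      fix g assume gH: "g \<in> H"
      have gp: "g permutes UNIV" using P gH by blast
      note LI = left_image[OF P HN(2) gH]
      have "perm_act g xb = (1 / real (card H)) *\<^sub>R (\<Sum>h\<in>H. perm_act g (perm_act h x))"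
        by (simp add: xb_def linear_scale[OF perm_act_linear] linear_sum[OF perm_act_linear])
      also have "(\<Sum>h\<in>H. perm_act g (perm_act h x)) = (\<Sum>h\<in>H. ((\<lambda>k. perm_act k x) \<circ> (\<lambda>k. g \<circ> k)) h)"
        using P gp by (intro sum.cong) (auto simp: perm_act_comp)
      also have "\<dots> = (\<Sum>h\<in>(\<lambda>k. g \<circ> k) ` H. perm_act h x)"
        by (rule sum.reindex[OF LI(2), symmetric])
      also have "\<dots> = (\<Sum>h\<in>H. perm_act h x)" using LI(1) by simp
      finally show "perm_act g xb = xb" by (simp add: xb_def)
    qed
    ultimately show "?F \<inter> Fix_set H \<noteq> {}" by blast
  qed
qed

end
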